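(* Let $D\subseteq(\omega+1)^\omega$ be a wide set. Then there are topological embeddings $\varphi:(\omega+1)^\omega\to D$ and $\psi:\omega^\omega\to P[D]$ such that $\psi\circ P=(P\restriction D)\circ\varphi$.
   Context: $(\omega+1)^\omega$ carries the product of the order topologies on $\omega+1$ (Cantor topology); $D$ carries the subspace topology; $\omega^\omega$ the usual Baire space topology and $P[D]\subseteq\omega^\omega$ the subspace topology. For $\tau\in(\omega+1)^{<\omega}$, $[\tau]=\{x:\tau\subseteq x\}$; for a tree $T\subseteq(\omega+1)^{<\omega}$, $\lim T=\{x:\forall n\ x\restriction n\in T\}$. $P:(\omega+1)^\omega\to\omega^\omega$ is given by $P(x)(n)=x(n)+1$ if $x(n)<\omega$, $P(x)(n)=0$ if $x(n)=\omega$. A tree $T$ is wide if every $\tau\in T$ has an extension $\tau'\in T$ such that $\lim T\cap[\tau']$ is nowhere dense (Cantor topology) in $\lim T\cap[\tau]$; a set is wide if it is $\lim T$ for a wide tree $T$. *)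

theory Defs
  imports "HOL-Analysis.Analysis" "HOL-Library.Sublist"
begin

text \<open>omega+1 is modelled by enat (infinity = omega), carrying its order topology
  (the linorder_topology instance of enat).\<close>

definition cantor_top :: "(nat \<Rightarrow> enat) topology" where
  "cantor_top = product_topology (\<lambda>_. euclidean) UNIV"

definition baire_top :: "(nat \<Rightarrow> nat) topology" where
  "baire_top = product_topology (\<lambda>_. discrete_topology UNIV) UNIV"

definition restr :: "(nat \<Rightarrow> 'a) \<Rightarrow> nat \<Rightarrow> 'a list" where
  "restr x n = map x [0..<n]"

definition cyl :: "enat list \<Rightarrow> (nat \<Rightarrow> enat) set" where
  "cyl \<tau> = {x. restr x (length \<tau>) = \<tau>}"

definition lim_tree :: "enat list set \<Rightarrow> (nat \<Rightarrow> enat) set" where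
  "lim_tree T = {x. \<forall>n. restr x n \<in> T}"

definition is_tree :: "'a list set \<Rightarrow> bool" where
  "is_tree T \<longleftrightarrow> (\<forall>\<sigma> \<tau>. \<tau> \<in> T \<and> prefix \<sigma> \<tau> \<longrightarrow> \<sigma> \<in> T)"

definition nowhere_dense_in :: "'a topology \<Rightarrow> 'a set \<Rightarrow> bool" where
  "nowhere_dense_in X A \<longleftrightarrow> A \<subseteq> topspace X \<and> X interior_of (X closure_of A) = {}"

definition wide_tree :: "enat list set \<Rightarrow> bool" where
  "wide_tree T \<longleftrightarrow> is_tree T \<and> [] \<in> T \<and> (\<forall>\<tau>\<in>T. \<exists>a. \<tau> @ [a] \<in> T) \<and>
     (\<forall>\<tau>\<in>T. \<exists>\<tau>'\<in>T. prefix \<tau> \<tau>' \<and>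
        nowhere_dense_in (subtopology cantor_top (lim_tree T \<inter> cyl \<tau>))
                         (lim_tree T \<inter> cyl \<tau>'))"

definition wide_set :: "(nat \<Rightarrow> enat) set \<Rightarrow> bool" where
  "wide_set D \<longleftrightarrow> (\<exists>T. wide_tree T \<and> D = lim_tree T)"

definition P_map :: "(nat \<Rightarrow> enat) \<Rightarrow> (nat \<Rightarrow> nat)" where
  "P_map x = (\<lambda>n. if x n = \<infinity> then 0 else the_enat (x n) + 1)"

end

theory Submission
  imports Defs
begin

definition tr :: "nat \<Rightarrow> enat \<Rightarrow> enat" where "tr p e = min e (enat p)"

definition agree :: "nat \<Rightarrow> nat \<Rightarrow> (nat \<Rightarrow> enat) \<Rightarrow> (nat \<Rightarrow> enat) \<Rightarrow> bool" where
  "agree p n x y \<longleftrightarrow> (\<forall>i<n. tr p (x i) = tr p (y i))"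

definition stl :: "(nat \<Rightarrow> 'a) \<Rightarrow> nat \<Rightarrow> 'a" where "stl w = (\<lambda>n. w (Suc n))"

definition incomp :: "'a list \<Rightarrow> 'a list \<Rightarrow> bool" where
  "incomp x y \<longleftrightarrow> \<not> prefix x y \<and> \<not> prefix y x"

definition limpt :: "(nat \<Rightarrow> 'a list) \<Rightarrow> nat \<Rightarrow> 'a" where "limpt s n = s (Suc n) ! n"

lemma incomp_sym: "incomp x y \<Longrightarrow> incomp y x"
  by (auto simp: incomp_def)

lemma tr_tr: "p \<le> q \<Longrightarrow> tr p (tr q e) = tr p e"
  by (simp add: tr_def min.assoc min_absorb2)

lemma tr_coarsen: "p \<le> q \<Longrightarrow> tr q a = tr q b \<Longrightarrow> tr p a = tr p b"
  by (metis tr_tr)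

lemma tr_le: "tr p e \<le> enat p"
  by (simp add: tr_def)

lemma tr_small: "tr M e' = tr M e \<Longrightarrow> e < enat M \<Longrightarrow> e' = e"
  by (auto simp: tr_def min_def split: if_splits)

lemma tr_large: "tr M e' = tr M e \<Longrightarrow> enat l \<le> e \<Longrightarrow> l \<le> M \<Longrightarrow> enat l \<le> e'"
proof -
  assume a: "tr M e' = tr M e" "enat l \<le> e" "l \<le> M"
  have "enat l \<le> tr M e" using a by (simp add: tr_def)
  then have "enat l \<le> tr M e'" using a by simp
  then show ?thesis by (simp add: tr_def)
qed

lemma agree_mono: "agree q n x y \<Longrightarrow> p \<le> q \<Longrightarrow> m \<le> n \<Longrightarrow> agree p m x y"
  unfolding agree_def
proof (intro allI impI)
  fix i assume a: "\<forall>i<n. tr q (x i) = tr q (y i)" "p \<le> q" "m \<le> n" "i < m"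
  then have "tr q (x i) = tr q (y i)" by simp
  then show "tr p (x i) = tr p (y i)" using a(2) by (rule tr_coarsen[rotated])
qed

lemma agree_le: "agree p n x y \<Longrightarrow> m \<le> n \<Longrightarrow> agree p m x y"
  by (simp add: agree_def)

lemma agree_refl [simp]: "agree p n x x"
  by (simp add: agree_def)

lemma agree_sym: "agree p n x y \<Longrightarrow> agree p n y x"
  by (simp add: agree_def)

lemma agree_trans: "agree p n x y \<Longrightarrow> agree p n y z \<Longrightarrow> agree p n x z"
  by (simp add: agree_def)

lemma agree_stl: "agree p (Suc n) w w' \<Longrightarrow> agree p n (stl w) (stl w')"
  by (simp add: agree_def stl_def)

lemma length_restr [simp]: "length (restr x n) = n"
  by (simp add: restr_def)

lemma nth_restr [simp]: "i < n \<Longrightarrow> restr x n ! i = x i"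
  by (simp add: restr_def)

lemma take_restr: "n \<le> m \<Longrightarrow> take n (restr x m) = restr x n"
  by (simp add: restr_def take_map)

lemma restr_eq_iff: "restr x n = restr y n \<longleftrightarrow> (\<forall>i<n. x i = y i)"
  by (auto simp: restr_def)

lemma restr_eq_nth: "restr x (length s) = s \<longleftrightarrow> (\<forall>i<length s. x i = s ! i)"
proof
  assume "restr x (length s) = s"
  then show "\<forall>i<length s. x i = s ! i" by (metis nth_restr)
next
  assume "\<forall>i<length s. x i = s ! i"
  then show "restr x (length s) = s" by (intro nth_equalityI) auto
qed

lemma cyl_iff: "x \<in> cyl s \<longleftrightarrow> (\<forall>i<length s. x i = s ! i)"
  by (simp add: cyl_def restr_eq_nth)

lemma prefix_nth': "prefix xs ys \<Longrightarrow> i < length xs \<Longrightarrow> xs ! i = ys ! i"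
  by (auto simp: prefix_def nth_append)

lemma cyl_mono: "prefix a b \<Longrightarrow> cyl b \<subseteq> cyl a"
proof
  fix x assume b: "x \<in> cyl b" and p: "prefix a b"
  have l: "length a \<le> length b" using p by (rule prefix_length_le)
  show "x \<in> cyl a" unfolding cyl_iff
  proof (intro allI impI)
    fix i assume i: "i < length a"
    then have "x i = b ! i" using b l by (simp add: cyl_iff)
    also have "\<dots> = a ! i" using prefix_nth'[OF p i] by simp
    finally show "x i = a ! i" .
  qed
qed

lemma prefix_restr: "prefix s (restr x n) \<longleftrightarrow> length s \<le> n \<and> x \<in> cyl s"
proof
  assume a: "prefix s (restr x n)"
  then have l: "length s \<le> n" using prefix_length_le by fastforce
  have "\<forall>i<length s. x i = s ! i"
  proof (intro allI impI)
    fix i assume i: "i < length s"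
    have "s ! i = restr x n ! i" using prefix_nth'[OF a i] .
    also have "\<dots> = x i" using i l by simp
    finally show "x i = s ! i" by simp
  qed
  then show "length s \<le> n \<and> x \<in> cyl s" using l by (simp add: cyl_iff)
next
  assume a: "length s \<le> n \<and> x \<in> cyl s"
  then have "take (length s) (restr x n) = s" by (simp add: take_restr cyl_def)
  then show "prefix s (restr x n)" by (metis take_is_prefix)
qed

lemma compatible_of_cyl:
  assumes "x \<in> cyl a" "x \<in> cyl b" shows "prefix a b \<or> prefix b a"
proof (cases "length a \<le> length b")
  case True
  have "take (length a) (restr x (length b)) = restr x (length a)" using True by (rule take_restr)
  then have "a = take (length a) b" using assms by (simp add: cyl_def)
  then show ?thesis by (metis take_is_prefix)
next
  case False
  have "take (length b) (restr x (length a)) = restr x (length b)" using False by (intro take_restr) simp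
  then have "b = take (length b) a" using assms by (simp add: cyl_def)
  then show ?thesis by (metis take_is_prefix)
qed

lemma incomp_not_cyl: "incomp a b \<Longrightarrow> x \<in> cyl a \<Longrightarrow> x \<notin> cyl b"
  using compatible_of_cyl[of x a b] unfolding incomp_def by auto

lemma incomp_restr:
  assumes "x \<notin> cyl s" "length s \<le> n" shows "incomp (restr x n) s"
proof -
  have 1: "\<not> prefix s (restr x n)" using assms by (simp add: prefix_restr)
  have "\<not> prefix (restr x n) s"
  proof
    assume p: "prefix (restr x n) s"
    then have "length s = n" using assms(2) prefix_length_le by fastforce
    from p obtain zs where zs: "s = restr x n @ zs" by (auto simp: prefix_def)
    then have "zs = []" using \<open>length s = n\<close>
      by (metis add_cancel_left_right length_0_conv length_append length_restr)
    then have "restr x (length s) = s" using zs \<open>length s = n\<close> by simp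
    then show False using assms(1) by (simp add: cyl_def)
  qed
  then show ?thesis using 1 by (simp add: incomp_def)
qed

section \<open>Open sets\<close>

lemma open_tr: "open {e :: enat. tr p e = c}"
proof (cases "c < enat p")
  case True
  then obtain k where k: "c = enat k" "k < p"
    by (cases c) auto
  have "{e. tr p e = c} = {enat k}"
    using k by (auto simp: tr_def min_def split: if_splits)
  then show ?thesis by (simp add: open_enat)
next
  case False
  show ?thesis
  proof (cases "c = enat p")
    case True
    show ?thesis
    proof (cases p)
      case 0
      then have "{e. tr p e = c} = UNIV" using True by (auto simp: tr_def zero_enat_def[symmetric])
      then show ?thesis by simp
    next
      case (Suc q)
      have "{e. tr p e = c} = {enat q <..}"
      proof (intro set_eqI iffI)
        fix e assume "e \<in> {e. tr p e = c}"
        then have "enat p \<le> e" using True by (auto simp: tr_def min_def split: if_splits)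
        then show "e \<in> {enat q <..}" using Suc by (simp add: Suc_ile_eq)
      next
        fix e assume "e \<in> {enat q <..}"
        then have "enat p \<le> e" using Suc by (simp add: Suc_ile_eq)
        then show "e \<in> {e. tr p e = c}" using True by (simp add: tr_def min_def)
      qed
      then show ?thesis by simp
    qed
  next
    case False2: False
    have "{e. tr p e = c} = {}"
      using False False2 by (auto simp: tr_def min_def split: if_splits)
    then show ?thesis by simp
  qed
qed

lemma open_agree_nbhd: "open {w'. agree M n w w'}"
proof -
  have "{w'. agree M n w w'} = {w'. \<forall>i\<in>{..<n}. w' i \<in> {e. tr M e = tr M (w i)}}"
    by (auto simp: agree_def)
  also have "\<dots> = {f. \<forall>i\<in>{..<n}. f (id i) \<in> (\<lambda>i. {e. tr M e = tr M (w i)}) i}"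
    by simp
  also have "open \<dots>"
    by (rule product_topology_basis') (simp_all add: open_tr)
  finally show ?thesis .
qed

lemma enat_open_nbhd:
  assumes "open V" "e \<in> V"
  shows "\<exists>l. \<forall>e'. tr l e' = tr l e \<longrightarrow> e' \<in> V"
proof (cases e)
  case (enat k)
  show ?thesis
  proof (rule exI[of _ "Suc k"], intro allI impI)
    fix e' assume "tr (Suc k) e' = tr (Suc k) e"
    then have "e' = e" by (rule tr_small) (simp add: enat)
    then show "e' \<in> V" using assms by simp
  qed
next
  case infinity
  have "e \<in> V" using assms by simp
  then have "\<infinity> \<in> V" using infinity by simp
  have "(0::enat) < \<infinity>" by simp
  obtain b where b: "b < \<infinity>" "{b <.. \<infinity>} \<subseteq> V"
    using open_left[OF assms(1) \<open>\<infinity> \<in> V\<close> \<open>(0::enat) < \<infinity>\<close>] by blast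
  then obtain k where k: "b = enat k" by (cases b) auto
  show ?thesis
  proof (rule exI[of _ "Suc k"], intro allI impI)
    fix e' assume "tr (Suc k) e' = tr (Suc k) e"
    then have "enat (Suc k) \<le> e'" by (rule tr_large) (simp_all add: infinity)
    then have "e' \<in> {b <.. \<infinity>}" using k by (auto simp: Suc_ile_eq)
    then show "e' \<in> V" using b by auto
  qed
qed


lemma open_coord: "open A \<Longrightarrow> open {x :: nat \<Rightarrow> 'a::topological_space. x i \<in> A}"
proof -
  assume A: "open A"
  have "{x :: nat \<Rightarrow> 'a. x i \<in> A} = {f. \<forall>j\<in>{i}. f (id j) \<in> (\<lambda>_. A) j}" by simp
  also have "open \<dots>" by (rule product_topology_basis') (simp_all add: A)
  finally show ?thesis .
qed

lemma cantor_top_eq: "cantor_top = euclidean"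
  by (simp add: cantor_top_def euclidean_product_topology)

lemma nowhere_dense_mono:
  "nowhere_dense_in Y A \<Longrightarrow> B \<subseteq> A \<Longrightarrow> nowhere_dense_in Y B"
proof -
  assume a: "nowhere_dense_in Y A" "B \<subseteq> A"
  have "Y interior_of (Y closure_of B) \<subseteq> Y interior_of (Y closure_of A)"
    by (intro interior_of_mono closure_of_mono a(2))
  then show ?thesis using a unfolding nowhere_dense_in_def by blast
qed

lemma map_tr_restr_eq: "map (tr p) (restr x n) = map (tr p) (restr y n) \<longleftrightarrow> agree p n x y"
  by (auto simp: restr_def agree_def)

locale WT =
  fixes T :: "enat list set"
  assumes wt: "wide_tree T"
begin

lemma root: "[] \<in> T"
  using wt by (simp add: wide_tree_def)

lemma tree_prefix: "\<tau> \<in> T \<Longrightarrow> prefix \<sigma> \<tau> \<Longrightarrow> \<sigma> \<in> T"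
  using wt by (auto simp: wide_tree_def is_tree_def)

lemma restr_in_T: "x \<in> lim_tree T \<Longrightarrow> restr x n \<in> T"
  by (simp add: lim_tree_def)

definition W :: "enat list \<Rightarrow> enat list" where
  "W \<sigma> = (SOME \<tau>. \<tau> \<in> T \<and> prefix \<sigma> \<tau> \<and> length \<sigma> < length \<tau> \<and>
      nowhere_dense_in (subtopology cantor_top (lim_tree T \<inter> cyl \<sigma>)) (lim_tree T \<inter> cyl \<tau>))"

lemma W_ex:
  assumes "\<sigma> \<in> T"
  shows "\<exists>\<tau>. \<tau> \<in> T \<and> prefix \<sigma> \<tau> \<and> length \<sigma> < length \<tau> \<and>
      nowhere_dense_in (subtopology cantor_top (lim_tree T \<inter> cyl \<sigma>)) (lim_tree T \<inter> cyl \<tau>)"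
proof -
  obtain \<tau> where \<tau>: "\<tau> \<in> T" "prefix \<sigma> \<tau>"
    "nowhere_dense_in (subtopology cantor_top (lim_tree T \<inter> cyl \<sigma>)) (lim_tree T \<inter> cyl \<tau>)"
    using wt assms unfolding wide_tree_def by blast
  obtain a where a: "\<tau> @ [a] \<in> T" using wt \<tau>(1) unfolding wide_tree_def by blast
  have p: "prefix \<tau> (\<tau> @ [a])" by simp
  have "prefix \<sigma> (\<tau> @ [a])" using \<tau>(2) p by (rule prefix_order.order_trans)
  moreover have "length \<sigma> < length (\<tau> @ [a])" using prefix_length_le[OF \<tau>(2)] by simp
  moreover have "nowhere_dense_in (subtopology cantor_top (lim_tree T \<inter> cyl \<sigma>)) (lim_tree T \<inter> cyl (\<tau> @ [a]))"
    by (rule nowhere_dense_mono[OF \<tau>(3)]) (use cyl_mono[OF p] in blast)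
  ultimately show ?thesis using a by blast
qed

lemma W:
  assumes "\<sigma> \<in> T"
  shows "W \<sigma> \<in> T" "prefix \<sigma> (W \<sigma>)" "length \<sigma> < length (W \<sigma>)"
    "nowhere_dense_in (subtopology cantor_top (lim_tree T \<inter> cyl \<sigma>)) (lim_tree T \<inter> cyl (W \<sigma>))"
  using someI_ex[OF W_ex[OF assms]] unfolding W_def[symmetric] by blast+

lemma approx_open:
  assumes "\<sigma> \<in> T" "y \<in> lim_tree T \<inter> cyl (W \<sigma>)" "open U" "y \<in> U"
  shows "\<exists>x \<in> lim_tree T \<inter> cyl \<sigma> \<inter> U. x \<notin> cyl (W \<sigma>)"
proof (rule ccontr)
  assume "\<not> ?thesis"
  then have H: "U \<inter> (lim_tree T \<inter> cyl \<sigma>) \<subseteq> lim_tree T \<inter> cyl (W \<sigma>)" by blast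
  define Y where "Y = lim_tree T \<inter> cyl \<sigma>"
  define Z where "Z = lim_tree T \<inter> cyl (W \<sigma>)"
  have ZY: "Z \<subseteq> Y" using cyl_mono[OF W(2)[OF assms(1)]] by (auto simp: Y_def Z_def)
  have top: "topspace (subtopology cantor_top Y) = Y" by (simp add: cantor_top_eq)
  have "openin euclidean U" using assms(3) by (simp add: open_openin[symmetric])
  then have op: "openin (subtopology cantor_top Y) (U \<inter> Y)"
    unfolding openin_subtopology cantor_top_eq by blast
  have "Z \<subseteq> (subtopology cantor_top Y) closure_of Z"
    by (rule closure_of_subset) (simp add: ZY cantor_top_eq)
  then have "U \<inter> Y \<subseteq> (subtopology cantor_top Y) closure_of Z" using H by (auto simp: Y_def Z_def)
  then have "U \<inter> Y \<subseteq> (subtopology cantor_top Y) interior_of ((subtopology cantor_top Y) closure_of Z)"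
    using op by (rule interior_of_maximal)
  moreover have "y \<in> U \<inter> Y" using assms ZY by (auto simp: Y_def Z_def)
  ultimately show False using W(4)[OF assms(1)] by (auto simp: nowhere_dense_in_def Y_def Z_def)
qed

lemma approx_node:
  assumes "\<sigma> \<in> T" "y \<in> lim_tree T \<inter> cyl (W \<sigma>)" "finite S" "\<forall>s\<in>S. y \<notin> cyl s"
  shows "\<exists>\<nu>\<in>T. prefix \<sigma> \<nu> \<and> incomp \<nu> (W \<sigma>) \<and> (\<forall>s\<in>S. incomp \<nu> s) \<and> n \<le> length \<nu> \<and>
           map (tr p) (take n \<nu>) = map (tr p) (restr y n)"
proof -
  have "\<forall>s\<in>S. \<exists>iV. fst iV < length s \<and> open (snd iV) \<and> y (fst iV) \<in> snd iV \<and> s ! fst iV \<notin> snd iV"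
  proof
    fix s assume "s \<in> S"
    then have "y \<notin> cyl s" using assms(4) by blast
    then obtain i where i: "i < length s" "y i \<noteq> s ! i" by (auto simp: cyl_iff)
    then obtain V where "open V" "y i \<in> V" "s ! i \<notin> V" using t1_space by blast
    then show "\<exists>iV. fst iV < length s \<and> open (snd iV) \<and> y (fst iV) \<in> snd iV \<and> s ! fst iV \<notin> snd iV"
      using i by (intro exI[of _ "(i, V)"]) simp
  qed
  then obtain g where g: "\<forall>s\<in>S. fst (g s) < length s \<and> open (snd (g s)) \<and> y (fst (g s)) \<in> snd (g s) \<and> s ! fst (g s) \<notin> snd (g s)"
    by (rule bchoice[elim_format]) blast
  define U where "U = {x. agree p n y x} \<inter> (\<Inter>s\<in>S. {x. x (fst (g s)) \<in> snd (g s)})"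
  have "open U" unfolding U_def
    using g assms(3) by (intro open_Int open_agree_nbhd open_INT ballI open_coord) auto
  moreover have "y \<in> U" using g by (auto simp: U_def)
  ultimately obtain x where x: "x \<in> lim_tree T" "x \<in> cyl \<sigma>" "x \<in> U" "x \<notin> cyl (W \<sigma>)"
    using approx_open[OF assms(1,2)] by blast
  define D where "D = max n (max (length (W \<sigma>)) (Max (insert 0 (length ` S))))"
  have DS: "length s \<le> D" if "s \<in> S" for s
  proof -
    have fin: "finite (insert 0 (length ` S))" using assms(3) by simp
    have "length s \<le> Max (insert 0 (length ` S))" by (rule Max_ge[OF fin]) (simp add: that)
    then show ?thesis unfolding D_def by linarith
  qed
  have Dn: "n \<le> D" "length (W \<sigma>) \<le> D" by (auto simp: D_def)
  have Ds: "length \<sigma> \<le> D" using Dn(2) W(3)[OF assms(1)] by simp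
  define \<nu> where "\<nu> = restr x D"
  have "\<nu> \<in> T" using x(1) by (simp add: \<nu>_def restr_in_T)
  moreover have "prefix \<sigma> \<nu>" using x(2) Ds by (simp add: \<nu>_def prefix_restr)
  moreover have "incomp \<nu> (W \<sigma>)" using x(4) Dn by (simp add: \<nu>_def incomp_restr)
  moreover have "\<forall>s\<in>S. incomp \<nu> s"
  proof
    fix s assume s: "s \<in> S"
    have "x (fst (g s)) \<noteq> s ! fst (g s)" using x(3) s g unfolding U_def by force
    then have "x \<notin> cyl s" using g s by (auto simp: cyl_iff)
    then show "incomp \<nu> s" using DS[OF s] by (simp add: \<nu>_def incomp_restr)
  qed
  moreover have "n \<le> length \<nu>" using Dn by (simp add: \<nu>_def)
  moreover have "map (tr p) (take n \<nu>) = map (tr p) (restr y n)"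
  proof -
    have "take n \<nu> = restr x n" using Dn by (simp add: \<nu>_def take_restr)
    moreover have "agree p n x y" using x(3) by (auto simp: U_def intro: agree_sym)
    ultimately show ?thesis by (simp add: map_tr_restr_eq)
  qed
  ultimately show ?thesis by blast
qed


lemma the_enat_less: "e < enat l \<Longrightarrow> the_enat e < l"
  by (cases e) auto

lemma enat_the_enat_less: "e < enat l \<Longrightarrow> enat (the_enat e) = e"
  by (cases e) auto

lemma finite_less_infty: "e < L \<Longrightarrow> enat (the_enat e) = e" for L :: enat
  by (cases e) auto

function nodeN :: "(nat \<Rightarrow> enat list \<Rightarrow> enat list \<Rightarrow> enat list) \<Rightarrow> nat \<Rightarrow> nat \<Rightarrow> enat list \<Rightarrow> (nat \<Rightarrow> enat) \<Rightarrow> enat list" where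
  "nodeN Nf l 0 \<sigma> w = \<sigma>"
| "nodeN Nf l (Suc k) \<sigma> w =
     (if w 0 < enat l
      then nodeN Nf l k (Nf (the_enat (w 0)) \<sigma>
              (map (tr (the_enat (w 0))) (take (length (W \<sigma>) + the_enat (w 0))
                 (nodeN Nf (the_enat (w 0)) (the_enat (w 0)) (W \<sigma>) (stl w))))) (stl w)
      else nodeN Nf l k (W \<sigma>) (stl w))"
  by pat_completeness auto
termination
  by (relation "measures [\<lambda>(Nf,l,k,\<sigma>,w). l, \<lambda>(Nf,l,k,\<sigma>,w). k]") (auto dest: the_enat_less)

definition pat :: "(nat \<Rightarrow> enat list \<Rightarrow> enat list \<Rightarrow> enat list) \<Rightarrow> nat \<Rightarrow> enat list \<Rightarrow> (nat \<Rightarrow> enat) \<Rightarrow> enat list" where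
  "pat Nf c \<sigma> w' = map (tr c) (take (length (W \<sigma>) + c) (nodeN Nf c c (W \<sigma>) w'))"

definition stepS :: "(nat \<Rightarrow> enat list \<Rightarrow> enat list \<Rightarrow> enat list) \<Rightarrow> enat \<Rightarrow> enat list \<Rightarrow> (nat \<Rightarrow> enat) \<Rightarrow> enat list" where
  "stepS Nf L \<sigma> w = (if w 0 < L then Nf (the_enat (w 0)) \<sigma> (pat Nf (the_enat (w 0)) \<sigma> (stl w)) else W \<sigma>)"

lemma nodeN_Suc': "nodeN Nf l (Suc k) \<sigma> w = nodeN Nf l k (stepS Nf (enat l) \<sigma> w) (stl w)"
  by (simp add: stepS_def pat_def)

declare nodeN.simps(2)[simp del]

primrec nodeI :: "(nat \<Rightarrow> enat list \<Rightarrow> enat list \<Rightarrow> enat list) \<Rightarrow> nat \<Rightarrow> enat list \<Rightarrow> (nat \<Rightarrow> enat) \<Rightarrow> enat list" where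
  "nodeI Nf 0 \<sigma> w = \<sigma>"
| "nodeI Nf (Suc k) \<sigma> w = nodeI Nf k (stepS Nf \<infinity> \<sigma> w) (stl w)"

definition nodeG :: "(nat \<Rightarrow> enat list \<Rightarrow> enat list \<Rightarrow> enat list) \<Rightarrow> enat \<Rightarrow> nat \<Rightarrow> enat list \<Rightarrow> (nat \<Rightarrow> enat) \<Rightarrow> enat list" where
  "nodeG Nf L k \<sigma> w = (case L of enat l \<Rightarrow> nodeN Nf l k \<sigma> w | \<infinity> \<Rightarrow> nodeI Nf k \<sigma> w)"

lemma nodeG_0 [simp]: "nodeG Nf L 0 \<sigma> w = \<sigma>"
  by (cases L) (simp_all add: nodeG_def)

lemma nodeG_Suc: "nodeG Nf L (Suc k) \<sigma> w = nodeG Nf L k (stepS Nf L \<sigma> w) (stl w)"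
  by (cases L) (simp_all add: nodeG_def nodeN_Suc')

lemma nodeN_nodeG: "nodeN Nf l k \<sigma> w = nodeG Nf (enat l) k \<sigma> w"
  by (simp add: nodeG_def)

lemma nodeN_cong:
  "(\<forall>c<l. Nf c = Nf' c) \<longrightarrow> nodeN Nf l k \<sigma> w = nodeN Nf' l k \<sigma> w"
proof (induction Nf l k \<sigma> w rule: nodeN.induct)
  case (1 Nf l \<sigma> w)
  then show ?case by simp
next
  case (2 Nf l k \<sigma> w)
  show ?case
  proof
    assume H: "\<forall>c<l. Nf c = Nf' c"
    show "nodeN Nf l (Suc k) \<sigma> w = nodeN Nf' l (Suc k) \<sigma> w"
    proof (cases "w 0 < enat l")
      case True
      define c where "c = the_enat (w 0)"
      have cl: "c < l" using True by (simp add: c_def the_enat_less)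
      have "\<forall>c'<c. Nf c' = Nf' c'" using H cl by simp
      then have inner: "nodeN Nf c c (W \<sigma>) (stl w) = nodeN Nf' c c (W \<sigma>) (stl w)"
        using "2.IH"(1) True unfolding c_def by blast
      have outer: "nodeN Nf l k (Nf c \<sigma> (map (tr c) (take (length (W \<sigma>) + c) (nodeN Nf c c (W \<sigma>) (stl w))))) (stl w)
         = nodeN Nf' l k (Nf c \<sigma> (map (tr c) (take (length (W \<sigma>) + c) (nodeN Nf c c (W \<sigma>) (stl w))))) (stl w)"
        using "2.IH"(2) True H unfolding c_def by blast
      show ?thesis using True outer inner H cl by (simp add: nodeN.simps(2) c_def[symmetric])
    next
      case False
      then show ?thesis using "2.IH"(3) H by (simp add: nodeN.simps(2))
    qed
  qed
qed

lemma pat_cong: assumes "\<forall>c'<c. Nf c' = Nf' c'" shows "pat Nf c \<sigma> w = pat Nf' c \<sigma> w"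
proof -
  have "nodeN Nf c c (W \<sigma>) w = nodeN Nf' c c (W \<sigma>) w" using nodeN_cong assms by blast
  then show ?thesis by (simp add: pat_def)
qed

definition Pats :: "(nat \<Rightarrow> enat list \<Rightarrow> enat list \<Rightarrow> enat list) \<Rightarrow> nat \<Rightarrow> enat list \<Rightarrow> enat list set" where
  "Pats Nf b \<sigma> = range (pat Nf b \<sigma>)"

definition spec :: "(nat \<Rightarrow> enat list \<Rightarrow> enat list \<Rightarrow> enat list) \<Rightarrow> nat \<Rightarrow> enat list \<Rightarrow> (enat list \<Rightarrow> enat list) \<Rightarrow> bool" where
  "spec Nf b \<sigma> F \<longleftrightarrow> (\<forall>\<beta>\<in>Pats Nf b \<sigma>. F \<beta> \<in> T \<and> prefix \<sigma> (F \<beta>) \<and> incomp (F \<beta>) (W \<sigma>) \<and>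
      length (W \<sigma>) + b \<le> length (F \<beta>) \<and> map (tr b) (take (length (W \<sigma>) + b) (F \<beta>)) = \<beta> \<and>
      (\<forall>\<beta>'\<in>Pats Nf b \<sigma>. \<beta>' \<noteq> \<beta> \<longrightarrow> incomp (F \<beta>) (F \<beta>')) \<and>
      (\<forall>c<b. \<forall>\<gamma>\<in>Pats Nf c \<sigma>. incomp (F \<beta>) (Nf c \<sigma> \<gamma>)))"

lemma Pats_cong: "\<forall>c'<c. Nf c' = Nf' c' \<Longrightarrow> Pats Nf c \<sigma> = Pats Nf' c \<sigma>"
  unfolding Pats_def using pat_cong by (metis image_cong)

lemma spec_cong:
  assumes "\<forall>c<b. Nf c = Nf' c"
  shows "spec Nf b \<sigma> F = spec Nf' b \<sigma> F"
proof -
  have 1: "Pats Nf b \<sigma> = Pats Nf' b \<sigma>" using assms by (rule Pats_cong)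
  have 2: "\<forall>c<b. Pats Nf c \<sigma> = Pats Nf' c \<sigma>" using assms by (auto intro!: Pats_cong)
  show ?thesis unfolding spec_def 1 using 2 assms by auto
qed

primrec Nfam :: "nat \<Rightarrow> (nat \<Rightarrow> enat list \<Rightarrow> enat list \<Rightarrow> enat list)" where
  "Nfam 0 = (\<lambda>_ _ _. [])"
| "Nfam (Suc b) = (Nfam b)(b := (\<lambda>\<sigma>. SOME F. spec (Nfam b) b \<sigma> F))"

definition NF :: "nat \<Rightarrow> enat list \<Rightarrow> enat list \<Rightarrow> enat list" where
  "NF c = Nfam (Suc c) c"

lemma Nfam_NF: "c < m \<Longrightarrow> Nfam m c = NF c"
proof (induction m)
  case 0 then show ?case by simp
next
  case (Suc m)
  then show ?case by (cases "c = m") (simp_all add: NF_def)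
qed

lemma NF_eq: "NF b \<sigma> = (SOME F. spec NF b \<sigma> F)"
proof -
  have "NF b \<sigma> = (SOME F. spec (Nfam b) b \<sigma> F)" by (simp add: NF_def)
  also have "(\<lambda>F. spec (Nfam b) b \<sigma> F) = (\<lambda>F. spec NF b \<sigma> F)"
    using Nfam_NF by (intro ext spec_cong) simp
  finally show ?thesis by simp
qed

definition good :: "nat \<Rightarrow> bool" where
  "good b \<longleftrightarrow> (\<forall>\<sigma>\<in>T. spec NF b \<sigma> (NF b \<sigma>))"

abbreviation goodbelow :: "enat \<Rightarrow> bool" where
  "goodbelow L \<equiv> \<forall>c. enat c < L \<longrightarrow> good c"

lemma pat_in_Pats [simp]: "pat Nf b \<sigma> w \<in> Pats Nf b \<sigma>"
  by (simp add: Pats_def)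

lemma step_props:
  assumes "\<sigma> \<in> T" "goodbelow L"
  shows "stepS NF L \<sigma> w \<in> T \<and> prefix \<sigma> (stepS NF L \<sigma> w) \<and> length \<sigma> < length (stepS NF L \<sigma> w)"
proof (cases "w 0 < L")
  case True
  define c where "c = the_enat (w 0)"
  have "enat c = w 0" using True by (simp add: c_def finite_less_infty)
  then have "good c" using assms(2) True by simp
  then have sp: "spec NF c \<sigma> (NF c \<sigma>)" using assms(1) by (simp add: good_def)
  have st: "stepS NF L \<sigma> w = NF c \<sigma> (pat NF c \<sigma> (stl w))" using True by (simp add: stepS_def c_def)
  have lW: "length \<sigma> < length (W \<sigma>)" using W(3)[OF assms(1)] .
  have "pat NF c \<sigma> (stl w) \<in> Pats NF c \<sigma>" by simp
  then have P: "NF c \<sigma> (pat NF c \<sigma> (stl w)) \<in> T" "prefix \<sigma> (NF c \<sigma> (pat NF c \<sigma> (stl w)))"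
    "length (W \<sigma>) + c \<le> length (NF c \<sigma> (pat NF c \<sigma> (stl w)))"
    using sp unfolding spec_def by blast+
  show ?thesis unfolding st using P lW by simp
next
  case False
  then show ?thesis using W[OF assms(1)] by (simp add: stepS_def)
qed

lemma node_props:
  assumes "goodbelow L"
  shows "\<sigma> \<in> T \<Longrightarrow> nodeG NF L k \<sigma> w \<in> T \<and> prefix \<sigma> (nodeG NF L k \<sigma> w) \<and> length \<sigma> + k \<le> length (nodeG NF L k \<sigma> w)"
proof (induction k arbitrary: \<sigma> w)
  case 0 then show ?case by simp
next
  case (Suc k)
  define \<sigma>1 where "\<sigma>1 = stepS NF L \<sigma> w"
  have s1: "\<sigma>1 \<in> T" "prefix \<sigma> \<sigma>1" "length \<sigma> < length \<sigma>1"
    using step_props[OF Suc.prems assms] by (simp_all add: \<sigma>1_def)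
  have "nodeG NF L k \<sigma>1 (stl w) \<in> T \<and> prefix \<sigma>1 (nodeG NF L k \<sigma>1 (stl w)) \<and> length \<sigma>1 + k \<le> length (nodeG NF L k \<sigma>1 (stl w))"
    using Suc.IH[OF s1(1)] .
  then have H: "nodeG NF L k \<sigma>1 (stl w) \<in> T" "prefix \<sigma>1 (nodeG NF L k \<sigma>1 (stl w))"
     "length \<sigma>1 + k \<le> length (nodeG NF L k \<sigma>1 (stl w))" by blast+
  have "prefix \<sigma> (nodeG NF L k \<sigma>1 (stl w))" using s1(2) H(2) by (rule prefix_order.order_trans)
  moreover have "length \<sigma> + Suc k \<le> length (nodeG NF L k \<sigma>1 (stl w))" using s1(3) H(3) by simp
  ultimately show ?case using H(1) unfolding nodeG_Suc \<sigma>1_def[symmetric] by blast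
qed

lemma node_mono1:
  assumes "goodbelow L"
  shows "\<sigma> \<in> T \<Longrightarrow> prefix (nodeG NF L k \<sigma> w) (nodeG NF L (Suc k) \<sigma> w)"
proof (induction k arbitrary: \<sigma> w)
  case 0
  then show ?case using step_props[OF 0 assms] by (simp add: nodeG_Suc)
next
  case (Suc k)
  have "stepS NF L \<sigma> w \<in> T" using step_props[OF Suc.prems assms] by simp
  then show ?case using Suc.IH by (simp add: nodeG_Suc[of _ _ "Suc k"] nodeG_Suc[of _ _ k])
qed

lemma node_mono:
  assumes "goodbelow L" "\<sigma> \<in> T" "k \<le> k'"
  shows "prefix (nodeG NF L k \<sigma> w) (nodeG NF L k' \<sigma> w)"
  using assms(3)
proof (induction k' rule: dec_induct)
  case base then show ?case by simp
next
  case (step k')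
  then show ?case using node_mono1[OF assms(1,2), of k' w] by (auto intro: prefix_order.order_trans)
qed

definition PhiG :: "enat \<Rightarrow> enat list \<Rightarrow> (nat \<Rightarrow> enat) \<Rightarrow> nat \<Rightarrow> enat" where
  "PhiG L \<sigma> w = limpt (\<lambda>k. nodeG NF L k \<sigma> w)"

lemma Phi_restr:
  assumes "goodbelow L" "\<sigma> \<in> T"
  shows "restr (PhiG L \<sigma> w) (length (nodeG NF L k \<sigma> w)) = nodeG NF L k \<sigma> w"
  unfolding restr_eq_nth
proof (intro allI impI)
  fix i assume i: "i < length (nodeG NF L k \<sigma> w)"
  have li: "i < length (nodeG NF L (Suc i) \<sigma> w)"
    using node_props[OF assms(1,2), of "Suc i" w] by simp
  show "PhiG L \<sigma> w i = nodeG NF L k \<sigma> w ! i"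
  proof (cases "Suc i \<le> k")
    case True
    then have "prefix (nodeG NF L (Suc i) \<sigma> w) (nodeG NF L k \<sigma> w)" by (rule node_mono[OF assms])
    then show ?thesis using li by (simp add: PhiG_def limpt_def prefix_nth')
  next
    case False
    then have "prefix (nodeG NF L k \<sigma> w) (nodeG NF L (Suc i) \<sigma> w)" by (intro node_mono[OF assms]) simp
    then show ?thesis using i by (simp add: PhiG_def limpt_def prefix_nth')
  qed
qed

lemma Phi_cyl:
  assumes "goodbelow L" "\<sigma> \<in> T"
  shows "PhiG L \<sigma> w \<in> cyl \<sigma>"
  using Phi_restr[OF assms, of w 0] by (simp add: cyl_def)

lemma Phi_in:
  assumes "goodbelow L" "\<sigma> \<in> T"
  shows "PhiG L \<sigma> w \<in> lim_tree T \<inter> cyl \<sigma>"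
proof -
  have "restr (PhiG L \<sigma> w) n \<in> T" for n
  proof -
    have np: "nodeG NF L n \<sigma> w \<in> T" "n \<le> length (nodeG NF L n \<sigma> w)"
      using node_props[OF assms, of n w] by auto
    have "restr (PhiG L \<sigma> w) n = take n (restr (PhiG L \<sigma> w) (length (nodeG NF L n \<sigma> w)))"
      using np(2) by (simp add: take_restr)
    also have "\<dots> = take n (nodeG NF L n \<sigma> w)" by (simp add: Phi_restr[OF assms])
    finally show ?thesis using np(1) by (metis take_is_prefix tree_prefix)
  qed
  then show ?thesis using Phi_cyl[OF assms] by (simp add: lim_tree_def)
qed

lemma Phi_step:
  assumes "goodbelow L" "\<sigma> \<in> T"
  shows "PhiG L \<sigma> w = PhiG L (stepS NF L \<sigma> w) (stl w)"
proof
  fix n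
  define \<sigma>1 where "\<sigma>1 = stepS NF L \<sigma> w"
  have s1: "\<sigma>1 \<in> T" using step_props[OF assms(2,1)] by (simp add: \<sigma>1_def)
  have "PhiG L \<sigma> w n = nodeG NF L n \<sigma>1 (stl w) ! n"
    by (simp add: PhiG_def limpt_def nodeG_Suc \<sigma>1_def)
  also have "\<dots> = nodeG NF L (Suc n) \<sigma>1 (stl w) ! n"
  proof -
    have "n < length (nodeG NF L n \<sigma>1 (stl w))"
      using node_props[OF assms(1) s1, of n "stl w"] step_props[OF assms(2,1), of w]
      unfolding \<sigma>1_def by auto
    then show ?thesis using node_mono1[OF assms(1) s1, of n "stl w"] by (simp add: prefix_nth')
  qed
  also have "\<dots> = PhiG L \<sigma>1 (stl w) n" by (simp add: PhiG_def limpt_def)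
  finally show "PhiG L \<sigma> w n = PhiG L (stepS NF L \<sigma> w) (stl w) n" by (simp add: \<sigma>1_def)
qed


lemma spec_D:
  assumes "spec Nf b \<sigma> F" "\<beta> \<in> Pats Nf b \<sigma>"
  shows "F \<beta> \<in> T" "prefix \<sigma> (F \<beta>)" "incomp (F \<beta>) (W \<sigma>)"
    "length (W \<sigma>) + b \<le> length (F \<beta>)" "map (tr b) (take (length (W \<sigma>) + b) (F \<beta>)) = \<beta>"
    "\<And>\<beta>'. \<beta>' \<in> Pats Nf b \<sigma> \<Longrightarrow> \<beta>' \<noteq> \<beta> \<Longrightarrow> incomp (F \<beta>) (F \<beta>')"
    "\<And>c \<gamma>. c < b \<Longrightarrow> \<gamma> \<in> Pats Nf c \<sigma> \<Longrightarrow> incomp (F \<beta>) (Nf c \<sigma> \<gamma>)"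
  using assms unfolding spec_def by blast+

lemma tr_in: "tr b e \<in> enat ` {..b}"
  by (cases e) (auto simp: tr_def min_def)

lemma Pats_finite: "finite (Pats Nf b \<sigma>)"
proof -
  have "Pats Nf b \<sigma> \<subseteq> {xs. set xs \<subseteq> enat ` {..b} \<and> length xs \<le> length (W \<sigma>) + b}"
    by (auto simp: Pats_def pat_def tr_in)
  moreover have "finite {xs. set xs \<subseteq> enat ` {..b} \<and> length xs \<le> length (W \<sigma>) + b}"
    by (intro finite_lists_length_le finite_imageI finite_atMost)
  ultimately show ?thesis by (rule finite_subset)
qed

lemma fin_choice:
  assumes "\<sigma> \<in> T" "finite P" "\<forall>\<beta>\<in>P. \<exists>y\<in>lim_tree T \<inter> cyl (W \<sigma>). map (tr b) (restr y n) = \<beta>"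
    "finite S" "\<forall>s\<in>S. incomp s (W \<sigma>)"
  shows "\<exists>F. \<forall>\<beta>\<in>P. F \<beta> \<in> T \<and> prefix \<sigma> (F \<beta>) \<and> incomp (F \<beta>) (W \<sigma>) \<and> n \<le> length (F \<beta>) \<and>
     map (tr b) (take n (F \<beta>)) = \<beta> \<and> (\<forall>\<beta>'\<in>P. \<beta>' \<noteq> \<beta> \<longrightarrow> incomp (F \<beta>) (F \<beta>')) \<and> (\<forall>s\<in>S. incomp (F \<beta>) s)"
  using assms(2,3)
proof (induction P rule: finite_induct)
  case empty
  then show ?case by simp
next
  case (insert \<beta> P)
  obtain F where F: "\<forall>\<beta>\<in>P. F \<beta> \<in> T \<and> prefix \<sigma> (F \<beta>) \<and> incomp (F \<beta>) (W \<sigma>) \<and> n \<le> length (F \<beta>) \<and>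
     map (tr b) (take n (F \<beta>)) = \<beta> \<and> (\<forall>\<beta>'\<in>P. \<beta>' \<noteq> \<beta> \<longrightarrow> incomp (F \<beta>) (F \<beta>')) \<and> (\<forall>s\<in>S. incomp (F \<beta>) s)"
  proof -
    have "\<forall>\<beta>\<in>P. \<exists>y\<in>lim_tree T \<inter> cyl (W \<sigma>). map (tr b) (restr y n) = \<beta>"
      using insert.prems by simp
    then show ?thesis using insert.IH that by blast
  qed
  have Fw: "incomp (F \<beta>') (W \<sigma>)" if "\<beta>' \<in> P" for \<beta>'
    using bspec[OF F that] by blast
  have Fr: "incomp (F \<beta>') (F \<beta>'')" if "\<beta>' \<in> P" "\<beta>'' \<in> P" "\<beta>'' \<noteq> \<beta>'" for \<beta>' \<beta>''
    using bspec[OF F that(1)] that(2,3) by blast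
  obtain y where y: "y \<in> lim_tree T \<inter> cyl (W \<sigma>)" "map (tr b) (restr y n) = \<beta>"
    using insert.prems by blast
  have fin: "finite (S \<union> F ` P)" using assms(4) insert.hyps(1) by simp
  have ny: "\<forall>s\<in>S \<union> F ` P. y \<notin> cyl s"
  proof
    fix s assume s: "s \<in> S \<union> F ` P"
    have "incomp s (W \<sigma>)"
    proof (cases "s \<in> S")
      case True then show ?thesis using assms(5) by blast
    next
      case False then obtain \<beta>' where "\<beta>' \<in> P" "s = F \<beta>'" using s by blast
      then show ?thesis using Fw by blast
    qed
    then show "y \<notin> cyl s" using y(1) incomp_not_cyl incomp_sym by blast
  qed
  obtain \<nu> where \<nu>: "\<nu> \<in> T" "prefix \<sigma> \<nu>" "incomp \<nu> (W \<sigma>)" "\<forall>s\<in>S \<union> F ` P. incomp \<nu> s" "n \<le> length \<nu>"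
    "map (tr b) (take n \<nu>) = map (tr b) (restr y n)"
    using approx_node[OF assms(1) y(1) fin ny, of n b] by blast
  define F' where "F' = F(\<beta> := \<nu>)"
  show ?case
  proof (rule exI[of _ F'], intro ballI)
    fix \<beta>'' assume b'': "\<beta>'' \<in> insert \<beta> P"
    show "F' \<beta>'' \<in> T \<and> prefix \<sigma> (F' \<beta>'') \<and> incomp (F' \<beta>'') (W \<sigma>) \<and> n \<le> length (F' \<beta>'') \<and>
     map (tr b) (take n (F' \<beta>'')) = \<beta>'' \<and> (\<forall>\<beta>'\<in>insert \<beta> P. \<beta>' \<noteq> \<beta>'' \<longrightarrow> incomp (F' \<beta>'') (F' \<beta>')) \<and>
     (\<forall>s\<in>S. incomp (F' \<beta>'') s)"
    proof (cases "\<beta>'' = \<beta>")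
      case True
      have F'b: "F' \<beta> = \<nu>" by (simp add: F'_def)
      have i: "\<forall>\<beta>'\<in>insert \<beta> P. \<beta>' \<noteq> \<beta> \<longrightarrow> incomp \<nu> (F' \<beta>')"
      proof (intro ballI impI)
        fix \<beta>' assume "\<beta>' \<in> insert \<beta> P" "\<beta>' \<noteq> \<beta>"
        then have "\<beta>' \<in> P" "F' \<beta>' = F \<beta>'" by (auto simp: F'_def)
        then show "incomp \<nu> (F' \<beta>')" using \<nu>(4) by simp
      qed
      have "\<forall>s\<in>S. incomp \<nu> s" using \<nu>(4) by simp
      then show ?thesis unfolding True F'b using \<nu>(1,2,3,5,6) y(2) i by simp
    next
      case False
      then have b''P: "\<beta>'' \<in> P" using b'' by simp
      have Fb: "F' \<beta>'' = F \<beta>''" using False by (simp add: F'_def)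
      have i1: "incomp (F \<beta>'') \<nu>" using \<nu>(4) b''P by (blast intro: incomp_sym)
      have i2: "\<forall>\<beta>'\<in>insert \<beta> P. \<beta>' \<noteq> \<beta>'' \<longrightarrow> incomp (F \<beta>'') (F' \<beta>')"
      proof (intro ballI impI)
        fix \<beta>' assume a: "\<beta>' \<in> insert \<beta> P" "\<beta>' \<noteq> \<beta>''"
        show "incomp (F \<beta>'') (F' \<beta>')"
        proof (cases "\<beta>' = \<beta>")
          case True then show ?thesis using i1 by (simp add: F'_def)
        next
          case False
          then have "\<beta>' \<in> P" "F' \<beta>' = F \<beta>'" using a by (auto simp: F'_def)
          then show ?thesis using Fr[OF b''P] a(2) by simp
        qed
      qed
      have c: "F \<beta>'' \<in> T \<and> prefix \<sigma> (F \<beta>'') \<and> incomp (F \<beta>'') (W \<sigma>) \<and> n \<le> length (F \<beta>'') \<and>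
         map (tr b) (take n (F \<beta>'')) = \<beta>'' \<and> (\<forall>s\<in>S. incomp (F \<beta>'') s)"
        using bspec[OF F b''P] by blast
      show ?thesis unfolding Fb using c i2 by simp
    qed
  qed
qed

lemma all_good: "good b"
proof (induction b rule: less_induct)
  case (less b)
  have gb: "goodbelow (enat b)" using less by simp
  show "good b" unfolding good_def
  proof
    fix \<sigma> assume \<sigma>: "\<sigma> \<in> T"
    define n where "n = length (W \<sigma>) + b"
    have WT: "W \<sigma> \<in> T" using W(1)[OF \<sigma>] .
    have P: "\<forall>\<beta>\<in>Pats NF b \<sigma>. \<exists>y\<in>lim_tree T \<inter> cyl (W \<sigma>). map (tr b) (restr y n) = \<beta>"
    proof
      fix \<beta> assume "\<beta> \<in> Pats NF b \<sigma>"
      then obtain w' where \<beta>: "\<beta> = pat NF b \<sigma> w'" by (auto simp: Pats_def)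
      define y where "y = PhiG (enat b) (W \<sigma>) w'"
      have yin: "y \<in> lim_tree T \<inter> cyl (W \<sigma>)" unfolding y_def by (rule Phi_in[OF gb WT])
      have nd: "n \<le> length (nodeG NF (enat b) b (W \<sigma>) w')"
        using node_props[OF gb WT, of b w'] by (simp add: n_def)
      have "restr y n = take n (restr y (length (nodeG NF (enat b) b (W \<sigma>) w')))"
        using nd by (simp add: take_restr)
      also have "\<dots> = take n (nodeG NF (enat b) b (W \<sigma>) w')"
        unfolding y_def by (simp add: Phi_restr[OF gb WT])
      finally have "map (tr b) (restr y n) = \<beta>"
        by (simp add: \<beta> pat_def nodeN_nodeG n_def)
      then show "\<exists>y\<in>lim_tree T \<inter> cyl (W \<sigma>). map (tr b) (restr y n) = \<beta>" using yin by blast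
    qed
    define S where "S = (\<Union>c\<in>{..<b}. NF c \<sigma> ` Pats NF c \<sigma>)"
    have finS: "finite S" unfolding S_def by (simp add: Pats_finite)
    have incS: "\<forall>s\<in>S. incomp s (W \<sigma>)"
    proof
      fix s assume "s \<in> S"
      then obtain c \<gamma> where c: "c < b" "\<gamma> \<in> Pats NF c \<sigma>" "s = NF c \<sigma> \<gamma>" by (auto simp: S_def)
      have "good c" using less c(1) by blast
      then have "spec NF c \<sigma> (NF c \<sigma>)" using \<sigma> unfolding good_def by blast
      then show "incomp s (W \<sigma>)" unfolding c(3) using c(2) by (rule spec_D(3))
    qed
    obtain F where F: "\<forall>\<beta>\<in>Pats NF b \<sigma>. F \<beta> \<in> T \<and> prefix \<sigma> (F \<beta>) \<and> incomp (F \<beta>) (W \<sigma>) \<and> n \<le> length (F \<beta>) \<and>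
     map (tr b) (take n (F \<beta>)) = \<beta> \<and> (\<forall>\<beta>'\<in>Pats NF b \<sigma>. \<beta>' \<noteq> \<beta> \<longrightarrow> incomp (F \<beta>) (F \<beta>')) \<and> (\<forall>s\<in>S. incomp (F \<beta>) s)"
      using fin_choice[OF \<sigma> Pats_finite P finS incS] by blast
    have "spec NF b \<sigma> F"
      unfolding spec_def
    proof
      fix \<beta> assume b: "\<beta> \<in> Pats NF b \<sigma>"
      have Fb: "F \<beta> \<in> T \<and> prefix \<sigma> (F \<beta>) \<and> incomp (F \<beta>) (W \<sigma>) \<and> n \<le> length (F \<beta>) \<and>
        map (tr b) (take n (F \<beta>)) = \<beta> \<and> (\<forall>\<beta>'\<in>Pats NF b \<sigma>. \<beta>' \<noteq> \<beta> \<longrightarrow> incomp (F \<beta>) (F \<beta>')) \<and> (\<forall>s\<in>S. incomp (F \<beta>) s)"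
        using bspec[OF F b] .
      have "\<forall>c<b. \<forall>\<gamma>\<in>Pats NF c \<sigma>. incomp (F \<beta>) (NF c \<sigma> \<gamma>)"
      proof (intro allI impI ballI)
        fix c \<gamma> assume "c < b" "\<gamma> \<in> Pats NF c \<sigma>"
        then have "NF c \<sigma> \<gamma> \<in> S" by (auto simp: S_def)
        then show "incomp (F \<beta>) (NF c \<sigma> \<gamma>)" using Fb by blast
      qed
      moreover have "F \<beta> \<in> T" "prefix \<sigma> (F \<beta>)" "incomp (F \<beta>) (W \<sigma>)" "n \<le> length (F \<beta>)"
        "map (tr b) (take n (F \<beta>)) = \<beta>" "\<forall>\<beta>'\<in>Pats NF b \<sigma>. \<beta>' \<noteq> \<beta> \<longrightarrow> incomp (F \<beta>) (F \<beta>')"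
        using Fb by blast+
      ultimately show "F \<beta> \<in> T \<and> prefix \<sigma> (F \<beta>) \<and> incomp (F \<beta>) (W \<sigma>) \<and>
      length (W \<sigma>) + b \<le> length (F \<beta>) \<and> map (tr b) (take (length (W \<sigma>) + b) (F \<beta>)) = \<beta> \<and>
      (\<forall>\<beta>'\<in>Pats NF b \<sigma>. \<beta>' \<noteq> \<beta> \<longrightarrow> incomp (F \<beta>) (F \<beta>')) \<and>
      (\<forall>c<b. \<forall>\<gamma>\<in>Pats NF c \<sigma>. incomp (F \<beta>) (NF c \<sigma> \<gamma>))"
        unfolding n_def[symmetric] by (intro conjI)
    qed
    then have "spec NF b \<sigma> (SOME F. spec NF b \<sigma> F)" by (rule someI[of "spec NF b \<sigma>"])
    then show "spec NF b \<sigma> (NF b \<sigma>)" using NF_eq[of b \<sigma>] by simp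
  qed
qed

lemma gb_all: "goodbelow L"
  using all_good by simp


lemma Phi_restr0: "\<sigma> \<in> T \<Longrightarrow> restr (PhiG L \<sigma> w) (length \<sigma>) = \<sigma>"
  using Phi_restr[OF gb_all, of \<sigma> L w 0] by simp

lemma Phi_nth_node: "\<sigma> \<in> T \<Longrightarrow> i < length \<sigma> \<Longrightarrow> PhiG L \<sigma> w i = \<sigma> ! i"
  using Phi_restr0[of \<sigma> L w] by (metis nth_restr)

lemma pat_Phi:
  assumes "\<sigma> \<in> T"
  shows "pat NF c \<sigma> w' = map (tr c) (restr (PhiG (enat c) (W \<sigma>) w') (length (W \<sigma>) + c))"
proof -
  have WT: "W \<sigma> \<in> T" using W(1)[OF assms] .
  have nd: "length (W \<sigma>) + c \<le> length (nodeG NF (enat c) c (W \<sigma>) w')"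
    using node_props[OF gb_all WT, where k=c and w=w'] by simp
  have "restr (PhiG (enat c) (W \<sigma>) w') (length (W \<sigma>) + c)
      = take (length (W \<sigma>) + c) (restr (PhiG (enat c) (W \<sigma>) w') (length (nodeG NF (enat c) c (W \<sigma>) w')))"
    using nd by (simp add: take_restr)
  also have "\<dots> = take (length (W \<sigma>) + c) (nodeG NF (enat c) c (W \<sigma>) w')"
    by (simp add: Phi_restr[OF gb_all WT])
  finally show ?thesis by (simp add: pat_def nodeN_nodeG)
qed

lemma stepT: "\<sigma> \<in> T \<Longrightarrow> stepS NF L \<sigma> w \<in> T" "\<sigma> \<in> T \<Longrightarrow> length \<sigma> < length (stepS NF L \<sigma> w)"
  using step_props[OF _ gb_all] by blast+

lemma spec_NF: "\<sigma> \<in> T \<Longrightarrow> spec NF c \<sigma> (NF c \<sigma>)"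
  using all_good by (simp add: good_def)

lemma lev_agree:
  assumes "enat l \<le> L" "d \<le> l" "\<sigma> \<in> T"
  shows "agree l (length \<sigma> + d) (PhiG L \<sigma> w) (PhiG (enat l) \<sigma> w)"
  using assms
proof (induction d arbitrary: \<sigma> w L)
  case 0
  then show ?case by (simp add: agree_def Phi_nth_node)
next
  case (Suc d)
  have \<sigma>: "\<sigma> \<in> T" and lL: "enat l \<le> L" using Suc.prems by simp_all
  have dl: "d \<le> l" using Suc.prems by simp
  have lW: "length \<sigma> < length (W \<sigma>)" using W(3)[OF \<sigma>] .
  have WT: "W \<sigma> \<in> T" using W(1)[OF \<sigma>] .
  show ?case
  proof (cases "w 0 < enat l")
    case True
    then have "w 0 < L" using lL by (rule less_le_trans)
    then have eq: "stepS NF L \<sigma> w = stepS NF (enat l) \<sigma> w"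
      using True by (simp add: stepS_def)
    define \<sigma>1 where "\<sigma>1 = stepS NF (enat l) \<sigma> w"
    have s1: "\<sigma>1 \<in> T" "length \<sigma> < length \<sigma>1" using stepT[OF \<sigma>] by (simp_all add: \<sigma>1_def)
    have "agree l (length \<sigma>1 + d) (PhiG L \<sigma>1 (stl w)) (PhiG (enat l) \<sigma>1 (stl w))"
      using Suc.IH[OF lL dl s1(1)] .
    moreover have "PhiG L \<sigma> w = PhiG L \<sigma>1 (stl w)" using Phi_step[OF gb_all \<sigma>] eq by (simp add: \<sigma>1_def)
    moreover have "PhiG (enat l) \<sigma> w = PhiG (enat l) \<sigma>1 (stl w)" using Phi_step[OF gb_all \<sigma>] by (simp add: \<sigma>1_def)
    moreover have "length \<sigma> + Suc d \<le> length \<sigma>1 + d" using s1(2) by simp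
    ultimately show ?thesis by (metis agree_le)
  next
    case False
    show ?thesis
    proof (cases "w 0 < L")
      case False2: False
      have eq1: "stepS NF L \<sigma> w = W \<sigma>" using False2 by (simp add: stepS_def)
      have eq2: "stepS NF (enat l) \<sigma> w = W \<sigma>" using False by (simp add: stepS_def)
      have "agree l (length (W \<sigma>) + d) (PhiG L (W \<sigma>) (stl w)) (PhiG (enat l) (W \<sigma>) (stl w))"
        using Suc.IH[OF lL dl WT] .
      moreover have "PhiG L \<sigma> w = PhiG L (W \<sigma>) (stl w)" using Phi_step[OF gb_all \<sigma>] eq1 by simp
      moreover have "PhiG (enat l) \<sigma> w = PhiG (enat l) (W \<sigma>) (stl w)" using Phi_step[OF gb_all \<sigma>] eq2 by simp
      moreover have "length \<sigma> + Suc d \<le> length (W \<sigma>) + d" using lW by simp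
      ultimately show ?thesis by (metis agree_le)
    next
      case True
      define c where "c = the_enat (w 0)"
      have wc: "w 0 = enat c" using True by (simp add: c_def finite_less_infty)
      have lc: "l \<le> c" using False wc by simp
      define n where "n = length (W \<sigma>) + c"
      define \<nu> where "\<nu> = NF c \<sigma> (pat NF c \<sigma> (stl w))"
      have eq1: "stepS NF L \<sigma> w = \<nu>" using True by (simp add: stepS_def \<nu>_def c_def)
      have eq2: "stepS NF (enat l) \<sigma> w = W \<sigma>" using False by (simp add: stepS_def)
      have sp: "spec NF c \<sigma> (NF c \<sigma>)" using spec_NF[OF \<sigma>] .
      have pin: "pat NF c \<sigma> (stl w) \<in> Pats NF c \<sigma>" by simp
      have \<nu>T: "\<nu> \<in> T" unfolding \<nu>_def using spec_D(1)[OF sp pin] .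
      have \<nu>len: "n \<le> length \<nu>" unfolding \<nu>_def n_def using spec_D(4)[OF sp pin] .
      have \<nu>pat: "map (tr c) (take n \<nu>) = pat NF c \<sigma> (stl w)"
        unfolding \<nu>_def n_def using spec_D(5)[OF sp pin] .
      have P1: "PhiG L \<sigma> w = PhiG L \<nu> (stl w)" using Phi_step[OF gb_all \<sigma>] eq1 by simp
      have "restr (PhiG L \<sigma> w) n = take n \<nu>"
        using \<nu>len Phi_restr0[OF \<nu>T, of L "stl w"] unfolding P1 by (metis take_restr)
      then have "map (tr c) (restr (PhiG L \<sigma> w) n) = map (tr c) (restr (PhiG (enat c) (W \<sigma>) (stl w)) n)"
        using \<nu>pat pat_Phi[OF \<sigma>] by (simp add: n_def)
      then have A1: "agree c n (PhiG L \<sigma> w) (PhiG (enat c) (W \<sigma>) (stl w))"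
        by (simp add: map_tr_restr_eq)
      have A2: "agree l (length (W \<sigma>) + d) (PhiG (enat c) (W \<sigma>) (stl w)) (PhiG (enat l) (W \<sigma>) (stl w))"
        using Suc.IH[of "enat c" "W \<sigma>"] lc dl WT by simp
      have P2: "PhiG (enat l) \<sigma> w = PhiG (enat l) (W \<sigma>) (stl w)" using Phi_step[OF gb_all \<sigma>] eq2 by simp
      have le1: "length \<sigma> + Suc d \<le> n" using lW lc Suc.prems(2) by (simp add: n_def)
      have le2: "length \<sigma> + Suc d \<le> length (W \<sigma>) + d" using lW by simp
      have "agree l (length \<sigma> + Suc d) (PhiG L \<sigma> w) (PhiG (enat c) (W \<sigma>) (stl w))"
        using A1 lc le1 by (rule agree_mono)
      moreover have "agree l (length \<sigma> + Suc d) (PhiG (enat c) (W \<sigma>) (stl w)) (PhiG (enat l) (W \<sigma>) (stl w))"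
        using A2 le2 by (rule agree_mono[OF _ order_refl])
      ultimately show ?thesis unfolding P2 by (rule agree_trans)
    qed
  qed
qed

lemma agree_first:
  assumes "agree M M w w'" "w 0 < enat l" "l < M"
  shows "w' 0 = w 0"
proof -
  have "tr M (w 0) = tr M (w' 0)" using assms(1,3) by (simp add: agree_def)
  moreover have "w 0 < enat M"
  proof -
    have "enat l < enat M" using assms(3) by simp
    with assms(2) show ?thesis by (rule less_trans)
  qed
  ultimately show ?thesis by (rule tr_small[OF sym])
qed

lemma agree_first_large:
  assumes "agree M M w w'" "\<not> w 0 < enat l" "l < M"
  shows "\<not> w' 0 < enat l"
proof -
  have "tr M (w' 0) = tr M (w 0)" using assms(1,3) by (simp add: agree_def)
  moreover have "enat l \<le> w 0" using assms(2) by simp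
  ultimately have "enat l \<le> w' 0" using less_imp_le[OF assms(3)] by (rule tr_large)
  then show ?thesis by simp
qed

lemma agree_tail:
  assumes "agree M M w w'" "K < M"
  shows "agree K K (stl w) (stl w')"
proof -
  have "Suc K \<le> M" using assms(2) by simp
  with assms(1) have "agree M (Suc K) w w'" by (rule agree_le)
  then have "agree M K (stl w) (stl w')" by (rule agree_stl)
  then show ?thesis using less_imp_le[OF assms(2)] order_refl by (rule agree_mono)
qed

lemma MOD:
  "\<forall>\<sigma> w d. \<sigma> \<in> T \<longrightarrow> (\<exists>M. \<forall>w'. agree M M w w' \<longrightarrow>
      agree l (length \<sigma> + d) (PhiG (enat l) \<sigma> w) (PhiG (enat l) \<sigma> w'))"
proof (induction l rule: less_induct)
  case (less l)
  have "\<sigma> \<in> T \<Longrightarrow> \<exists>M. \<forall>w'. agree M M w w' \<longrightarrow>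
      agree l (length \<sigma> + d) (PhiG (enat l) \<sigma> w) (PhiG (enat l) \<sigma> w')" for \<sigma> w d
  proof (induction d arbitrary: \<sigma> w)
    case 0
    then show ?case by (intro exI[of _ 0]) (simp add: agree_def Phi_nth_node)
  next
    case (Suc d)
    have \<sigma>: "\<sigma> \<in> T" by fact
    have lW: "length \<sigma> < length (W \<sigma>)" using W(3)[OF \<sigma>] .
    have WT: "W \<sigma> \<in> T" using W(1)[OF \<sigma>] .
    show ?case
    proof (cases "w 0 < enat l")
      case True
      define c where "c = the_enat (w 0)"
      have wc: "w 0 = enat c" using True by (simp add: c_def finite_less_infty)
      have cl: "c < l" using True wc by simp
      obtain M1 where M1: "\<forall>v. agree M1 M1 (stl w) v \<longrightarrow>
          agree c (length (W \<sigma>) + c) (PhiG (enat c) (W \<sigma>) (stl w)) (PhiG (enat c) (W \<sigma>) v)"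
        using less.IH[OF cl] WT by blast
      define \<nu> where "\<nu> = NF c \<sigma> (pat NF c \<sigma> (stl w))"
      have st: "stepS NF (enat l) \<sigma> w = \<nu>" using True by (simp add: stepS_def \<nu>_def c_def)
      have \<nu>T: "\<nu> \<in> T" "length \<sigma> < length \<nu>" using stepT[OF \<sigma>, of "enat l" w] st by simp_all
      obtain M2 where M2: "\<forall>w'. agree M2 M2 (stl w) w' \<longrightarrow>
          agree l (length \<nu> + d) (PhiG (enat l) \<nu> (stl w)) (PhiG (enat l) \<nu> w')"
        using Suc.IH[OF \<nu>T(1)] by blast
      define M where "M = Suc (max (max M1 M2) l)"
      show ?thesis
      proof (intro exI[of _ M] allI impI)
        fix w' assume a: "agree M M w w'"
        have w0: "w' 0 = w 0" using agree_first[OF a True] by (simp add: M_def)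
        have t1: "agree M1 M1 (stl w) (stl w')" using agree_tail[OF a] by (simp add: M_def)
        have t2: "agree M2 M2 (stl w) (stl w')" using agree_tail[OF a] by (simp add: M_def)
        have "agree c (length (W \<sigma>) + c) (PhiG (enat c) (W \<sigma>) (stl w)) (PhiG (enat c) (W \<sigma>) (stl w'))"
          using M1 t1 by blast
        then have "pat NF c \<sigma> (stl w) = pat NF c \<sigma> (stl w')"
          by (simp add: pat_Phi[OF \<sigma>] map_tr_restr_eq)
        then have "pat NF c \<sigma> (stl w') = pat NF c \<sigma> (stl w)" by simp
        then have st': "stepS NF (enat l) \<sigma> w' = \<nu>" using True w0 by (simp add: stepS_def \<nu>_def c_def)
        have "agree l (length \<nu> + d) (PhiG (enat l) \<nu> (stl w)) (PhiG (enat l) \<nu> (stl w'))"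
          using M2 t2 by blast
        moreover have "PhiG (enat l) \<sigma> w = PhiG (enat l) \<nu> (stl w)" using Phi_step[OF gb_all \<sigma>] st by simp
        moreover have "PhiG (enat l) \<sigma> w' = PhiG (enat l) \<nu> (stl w')" using Phi_step[OF gb_all \<sigma>] st' by simp
        moreover have "length \<sigma> + Suc d \<le> length \<nu> + d" using \<nu>T(2) by simp
        ultimately show "agree l (length \<sigma> + Suc d) (PhiG (enat l) \<sigma> w) (PhiG (enat l) \<sigma> w')"
          by (metis agree_le)
      qed
    next
      case False
      have st: "stepS NF (enat l) \<sigma> w = W \<sigma>" using False by (simp add: stepS_def)
      obtain M2 where M2: "\<forall>w'. agree M2 M2 (stl w) w' \<longrightarrow>
          agree l (length (W \<sigma>) + d) (PhiG (enat l) (W \<sigma>) (stl w)) (PhiG (enat l) (W \<sigma>) w')"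
        using Suc.IH[OF WT] by blast
      define M where "M = Suc (max M2 l)"
      show ?thesis
      proof (intro exI[of _ M] allI impI)
        fix w' assume a: "agree M M w w'"
        have "\<not> w' 0 < enat l" using agree_first_large[OF a False] by (simp add: M_def)
        then have st': "stepS NF (enat l) \<sigma> w' = W \<sigma>" by (simp add: stepS_def)
        have t2: "agree M2 M2 (stl w) (stl w')" using agree_tail[OF a] by (simp add: M_def)
        have "agree l (length (W \<sigma>) + d) (PhiG (enat l) (W \<sigma>) (stl w)) (PhiG (enat l) (W \<sigma>) (stl w'))"
          using M2 t2 by blast
        moreover have "PhiG (enat l) \<sigma> w = PhiG (enat l) (W \<sigma>) (stl w)" using Phi_step[OF gb_all \<sigma>] st by simp
        moreover have "PhiG (enat l) \<sigma> w' = PhiG (enat l) (W \<sigma>) (stl w')" using Phi_step[OF gb_all \<sigma>] st' by simp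
        moreover have "length \<sigma> + Suc d \<le> length (W \<sigma>) + d" using lW by simp
        ultimately show "agree l (length \<sigma> + Suc d) (PhiG (enat l) \<sigma> w) (PhiG (enat l) \<sigma> w')"
          by (metis agree_le)
      qed
    qed
  qed
  then show ?case by blast
qed

lemma CONT:
  assumes "\<sigma> \<in> T"
  shows "\<exists>M. \<forall>w'. agree M M w w' \<longrightarrow> agree l (length \<sigma> + l) (PhiG \<infinity> \<sigma> w) (PhiG \<infinity> \<sigma> w')"
proof -
  obtain M where M: "\<forall>w'. agree M M w w' \<longrightarrow>
      agree l (length \<sigma> + l) (PhiG (enat l) \<sigma> w) (PhiG (enat l) \<sigma> w')"
    using MOD assms by blast
  show ?thesis
  proof (intro exI[of _ M] allI impI)
    fix w' assume a: "agree M M w w'"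
    have "agree l (length \<sigma> + l) (PhiG \<infinity> \<sigma> w) (PhiG (enat l) \<sigma> w)"
      using lev_agree[of l \<infinity> l \<sigma> w] assms by simp
    moreover have "agree l (length \<sigma> + l) (PhiG (enat l) \<sigma> w) (PhiG (enat l) \<sigma> w')" using M a by blast
    moreover have "agree l (length \<sigma> + l) (PhiG \<infinity> \<sigma> w') (PhiG (enat l) \<sigma> w')"
      using lev_agree[of l \<infinity> l \<sigma> w'] assms by simp
    ultimately show "agree l (length \<sigma> + l) (PhiG \<infinity> \<sigma> w) (PhiG \<infinity> \<sigma> w')"
      by (meson agree_sym agree_trans)
  qed
qed


lemma EXACT:
  "\<sigma> \<in> T \<Longrightarrow> \<exists>M. \<forall>w'. (\<forall>i<M. w' i = w i) \<longrightarrow> (\<forall>i<length \<sigma> + d. PhiG \<infinity> \<sigma> w' i = PhiG \<infinity> \<sigma> w i)"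
proof (induction d arbitrary: \<sigma> w)
  case 0
  then show ?case by (intro exI[of _ 0]) (simp add: Phi_nth_node)
next
  case (Suc d)
  have \<sigma>: "\<sigma> \<in> T" by fact
  have lW: "length \<sigma> < length (W \<sigma>)" using W(3)[OF \<sigma>] .
  have WT: "W \<sigma> \<in> T" using W(1)[OF \<sigma>] .
  show ?case
  proof (cases "w 0 < \<infinity>")
    case True
    define c where "c = the_enat (w 0)"
    have wc: "w 0 = enat c" using True by (cases "w 0") (simp_all add: c_def)
    obtain M1 where M1: "\<forall>v. agree M1 M1 (stl w) v \<longrightarrow>
        agree c (length (W \<sigma>) + c) (PhiG (enat c) (W \<sigma>) (stl w)) (PhiG (enat c) (W \<sigma>) v)"
      using MOD WT by blast
    define \<nu> where "\<nu> = NF c \<sigma> (pat NF c \<sigma> (stl w))"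
    have st: "stepS NF \<infinity> \<sigma> w = \<nu>" using True by (simp add: stepS_def \<nu>_def c_def)
    have \<nu>T: "\<nu> \<in> T" "length \<sigma> < length \<nu>" using stepT[OF \<sigma>, of \<infinity> w] st by simp_all
    obtain M2 where M2: "\<forall>w'. (\<forall>i<M2. w' i = stl w i) \<longrightarrow> (\<forall>i<length \<nu> + d. PhiG \<infinity> \<nu> w' i = PhiG \<infinity> \<nu> (stl w) i)"
      using Suc.IH[OF \<nu>T(1)] by blast
    define M where "M = Suc (max M1 M2)"
    show ?thesis
    proof (intro exI[of _ M] allI impI)
      fix w' i assume a: "\<forall>i<M. w' i = w i" and i: "i < length \<sigma> + Suc d"
      have w0: "w' 0 = w 0" using a by (simp add: M_def)
      have t1: "agree M1 M1 (stl w) (stl w')" using a by (simp add: agree_def stl_def M_def)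
      have t2: "\<forall>i<M2. stl w' i = stl w i" using a by (simp add: stl_def M_def)
      have "agree c (length (W \<sigma>) + c) (PhiG (enat c) (W \<sigma>) (stl w)) (PhiG (enat c) (W \<sigma>) (stl w'))"
        using M1 t1 by blast
      then have "pat NF c \<sigma> (stl w) = pat NF c \<sigma> (stl w')"
        by (simp add: pat_Phi[OF \<sigma>] map_tr_restr_eq)
      then have st': "stepS NF \<infinity> \<sigma> w' = \<nu>" using True w0 by (simp add: stepS_def \<nu>_def c_def)
      have P1: "PhiG \<infinity> \<sigma> w = PhiG \<infinity> \<nu> (stl w)" using Phi_step[OF gb_all \<sigma>] st by simp
      have P2: "PhiG \<infinity> \<sigma> w' = PhiG \<infinity> \<nu> (stl w')" using Phi_step[OF gb_all \<sigma>] st' by simp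
      have "i < length \<nu> + d" using i \<nu>T(2) by simp
      then show "PhiG \<infinity> \<sigma> w' i = PhiG \<infinity> \<sigma> w i" unfolding P1 P2 using M2 t2 by blast
    qed
  next
    case False
    have st: "stepS NF \<infinity> \<sigma> w = W \<sigma>" using False by (simp add: stepS_def)
    obtain M2 where M2: "\<forall>w'. (\<forall>i<M2. w' i = stl w i) \<longrightarrow> (\<forall>i<length (W \<sigma>) + d. PhiG \<infinity> (W \<sigma>) w' i = PhiG \<infinity> (W \<sigma>) (stl w) i)"
      using Suc.IH[OF WT] by blast
    define M where "M = Suc M2"
    show ?thesis
    proof (intro exI[of _ M] allI impI)
      fix w' i assume a: "\<forall>i<M. w' i = w i" and i: "i < length \<sigma> + Suc d"
      have w0: "w' 0 = w 0" using a by (simp add: M_def)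
      have t2: "\<forall>i<M2. stl w' i = stl w i" using a by (simp add: stl_def M_def)
      have st': "stepS NF \<infinity> \<sigma> w' = W \<sigma>" using False w0 by (simp add: stepS_def)
      have P1: "PhiG \<infinity> \<sigma> w = PhiG \<infinity> (W \<sigma>) (stl w)" using Phi_step[OF gb_all \<sigma>] st by simp
      have P2: "PhiG \<infinity> \<sigma> w' = PhiG \<infinity> (W \<sigma>) (stl w')" using Phi_step[OF gb_all \<sigma>] st' by simp
      have "i < length (W \<sigma>) + d" using i lW by simp
      then show "PhiG \<infinity> \<sigma> w' i = PhiG \<infinity> \<sigma> w i" unfolding P1 P2 using M2 t2 by blast
    qed
  qed
qed

lemma cand_incomp:
  assumes "\<sigma> \<in> T" "\<beta> \<in> Pats NF c \<sigma>" "\<beta>' \<in> Pats NF c' \<sigma>" "(c, \<beta>) \<noteq> (c', \<beta>')"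
  shows "incomp (NF c \<sigma> \<beta>) (NF c' \<sigma> \<beta>')"
proof (cases "c < c'")
  case True
  have "incomp (NF c' \<sigma> \<beta>') (NF c \<sigma> \<beta>)" using spec_D(7)[OF spec_NF[OF assms(1)] assms(3) True assms(2)] .
  then show ?thesis by (rule incomp_sym)
next
  case False
  show ?thesis
  proof (cases "c' < c")
    case True
    show ?thesis using spec_D(7)[OF spec_NF[OF assms(1)] assms(2) True assms(3)] .
  next
    case False2: False
    then have "c = c'" using False by simp
    then have "\<beta>' \<noteq> \<beta>" using assms(4) by auto
    then show ?thesis using spec_D(6)[OF spec_NF[OF assms(1)] assms(2)] assms(3) \<open>c = c'\<close> by simp
  qed
qed

lemma step_inj:
  assumes "\<sigma> \<in> T" "x \<in> cyl (stepS NF \<infinity> \<sigma> w)" "x \<in> cyl (stepS NF \<infinity> \<sigma> w')"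
  shows "w' 0 = w 0 \<and> stepS NF \<infinity> \<sigma> w' = stepS NF \<infinity> \<sigma> w"
proof -
  have comp: "\<not> incomp (stepS NF \<infinity> \<sigma> w) (stepS NF \<infinity> \<sigma> w')"
    using compatible_of_cyl[OF assms(2,3)] by (auto simp: incomp_def)
  show ?thesis
  proof (cases "w 0 < \<infinity>")
    case True
    define c where "c = the_enat (w 0)"
    have wc: "w 0 = enat c" using True by (cases "w 0") (simp_all add: c_def)
    have st: "stepS NF \<infinity> \<sigma> w = NF c \<sigma> (pat NF c \<sigma> (stl w))" using True by (simp add: stepS_def c_def)
    show ?thesis
    proof (cases "w' 0 < \<infinity>")
      case True2: True
      define c' where "c' = the_enat (w' 0)"
      have wc': "w' 0 = enat c'" using True2 by (cases "w' 0") (simp_all add: c'_def)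
      have st': "stepS NF \<infinity> \<sigma> w' = NF c' \<sigma> (pat NF c' \<sigma> (stl w'))" using True2 by (simp add: stepS_def c'_def)
      have "(c, pat NF c \<sigma> (stl w)) = (c', pat NF c' \<sigma> (stl w'))"
      proof (rule ccontr)
        assume "(c, pat NF c \<sigma> (stl w)) \<noteq> (c', pat NF c' \<sigma> (stl w'))"
        then have "incomp (NF c \<sigma> (pat NF c \<sigma> (stl w))) (NF c' \<sigma> (pat NF c' \<sigma> (stl w')))"
          using cand_incomp[OF assms(1)] by simp
        then show False using comp st st' by simp
      qed
      note eqp = this
      then have cc: "c = c'" by simp
      have pp: "pat NF c \<sigma> (stl w) = pat NF c' \<sigma> (stl w')" using arg_cong[OF eqp, of snd] by simp
      have "stepS NF \<infinity> \<sigma> w' = stepS NF \<infinity> \<sigma> w" unfolding st st' using cc pp by simp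
      then show ?thesis using wc wc' cc by simp
    next
      case False
      have st': "stepS NF \<infinity> \<sigma> w' = W \<sigma>" using False by (simp add: stepS_def)
      have "incomp (NF c \<sigma> (pat NF c \<sigma> (stl w))) (W \<sigma>)"
        using spec_D(3)[OF spec_NF[OF assms(1)] pat_in_Pats] .
      then show ?thesis using comp st st' by simp
    qed
  next
    case False
    have st: "stepS NF \<infinity> \<sigma> w = W \<sigma>" using False by (simp add: stepS_def)
    show ?thesis
    proof (cases "w' 0 < \<infinity>")
      case True
      define c' where "c' = the_enat (w' 0)"
      have st': "stepS NF \<infinity> \<sigma> w' = NF c' \<sigma> (pat NF c' \<sigma> (stl w'))" using True by (simp add: stepS_def c'_def)
      have "incomp (NF c' \<sigma> (pat NF c' \<sigma> (stl w'))) (W \<sigma>)"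
        using spec_D(3)[OF spec_NF[OF assms(1)] pat_in_Pats] .
      then have "incomp (W \<sigma>) (NF c' \<sigma> (pat NF c' \<sigma> (stl w')))" by (rule incomp_sym)
      then show ?thesis using comp st st' by simp
    next
      case False2: False
      then show ?thesis using False by (simp add: stepS_def)
    qed
  qed
qed

lemma INV:
  "\<sigma> \<in> T \<Longrightarrow> \<exists>M. \<forall>w'. (\<forall>i<M. PhiG \<infinity> \<sigma> w' i = PhiG \<infinity> \<sigma> w i) \<longrightarrow> (\<forall>i<n. w' i = w i)"
proof (induction n arbitrary: \<sigma> w)
  case 0
  then show ?case by simp
next
  case (Suc n)
  have \<sigma>: "\<sigma> \<in> T" by fact
  define \<sigma>1 where "\<sigma>1 = stepS NF \<infinity> \<sigma> w"
  have \<sigma>1T: "\<sigma>1 \<in> T" using stepT[OF \<sigma>] by (simp add: \<sigma>1_def)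
  obtain M2 where M2: "\<forall>w'. (\<forall>i<M2. PhiG \<infinity> \<sigma>1 w' i = PhiG \<infinity> \<sigma>1 (stl w) i) \<longrightarrow> (\<forall>i<n. w' i = stl w i)"
    using Suc.IH[OF \<sigma>1T] by blast
  define M where "M = max (length \<sigma>1) M2"
  show ?case
  proof (rule exI[of _ M], rule allI, rule impI)
    fix w' assume a: "\<forall>i<M. PhiG \<infinity> \<sigma> w' i = PhiG \<infinity> \<sigma> w i"
    have P: "PhiG \<infinity> \<sigma> w = PhiG \<infinity> \<sigma>1 (stl w)" using Phi_step[OF gb_all \<sigma>] by (simp add: \<sigma>1_def)
    have P': "PhiG \<infinity> \<sigma> w' = PhiG \<infinity> (stepS NF \<infinity> \<sigma> w') (stl w')" using Phi_step[OF gb_all \<sigma>] by simp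
    have hx1: "PhiG \<infinity> \<sigma> w' \<in> cyl (stepS NF \<infinity> \<sigma> w')"
      unfolding P' using Phi_cyl[OF gb_all stepT(1)[OF \<sigma>]] .
    have hx2: "PhiG \<infinity> \<sigma> w' \<in> cyl \<sigma>1"
      unfolding cyl_iff
    proof (intro allI impI)
      fix i assume i: "i < length \<sigma>1"
      then have "PhiG \<infinity> \<sigma> w' i = PhiG \<infinity> \<sigma> w i" using a by (simp add: M_def)
      also have "\<dots> = \<sigma>1 ! i" unfolding P using Phi_nth_node[OF \<sigma>1T i] .
      finally show "PhiG \<infinity> \<sigma> w' i = \<sigma>1 ! i" .
    qed
    have si: "w' 0 = w 0 \<and> stepS NF \<infinity> \<sigma> w' = \<sigma>1"
      using step_inj[OF \<sigma> hx2[unfolded \<sigma>1_def] hx1] by (simp add: \<sigma>1_def)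
    have "\<forall>i<M2. PhiG \<infinity> \<sigma>1 (stl w') i = PhiG \<infinity> \<sigma>1 (stl w) i"
      using a P P' si by (simp add: M_def)
    then have tl: "\<forall>i<n. stl w' i = stl w i" using M2 by blast
    show "\<forall>i<Suc n. w' i = w i"
    proof (intro allI impI)
      fix i assume "i < Suc n"
      then show "w' i = w i" using si tl by (cases i) (simp_all add: stl_def)
    qed
  qed
qed

end

definition Qmap :: "(nat \<Rightarrow> nat) \<Rightarrow> nat \<Rightarrow> enat" where
  "Qmap z = (\<lambda>n. if z n = 0 then \<infinity> else enat (z n - 1))"

lemma QP: "Qmap (P_map x) = x"
proof
  fix n show "Qmap (P_map x) n = x n"
    by (cases "x n") (simp_all add: Qmap_def P_map_def)
qed

lemma PQ: "P_map (Qmap z) = z"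
  by (auto simp: Qmap_def P_map_def fun_eq_iff)

lemma P_nth: "P_map x i = P_map y i \<longleftrightarrow> x i = y i"
  by (cases "x i"; cases "y i") (auto simp: P_map_def)

lemma baire_eq: "baire_top = euclidean"
proof -
  have "discrete_topology UNIV = (euclidean :: nat topology)"
    by (simp add: discrete_topology_unique open_discrete)
  then show ?thesis unfolding baire_top_def by (simp add: euclidean_product_topology)
qed

lemma compact_cantor: "compact_space cantor_top"
proof -
  have "compact_space (euclidean :: enat topology)"
    by (simp add: compact_space_def compact_UNIV)
  then have "\<forall>i\<in>UNIV. compact_space ((\<lambda>_. euclidean :: enat topology) i)" by simp
  then show ?thesis unfolding cantor_top_def
    by (rule iffD2[OF compact_space_product_topology, OF disjI2])
qed

lemma hausdorff_enat: "Hausdorff_space (euclidean :: enat topology)"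
  unfolding Hausdorff_space_def
proof (intro allI impI)
  fix x y :: enat
  assume a: "x \<in> topspace euclidean \<and> y \<in> topspace euclidean \<and> x \<noteq> y"
  then have "x \<noteq> y" by blast
  from hausdorff[OF this] obtain U V where UV: "open U" "open V" "x \<in> U" "y \<in> V" "U \<inter> V = {}"
    by blast
  have "openin euclidean U" by (unfold open_openin[symmetric]) (rule UV(1))
  moreover have "openin euclidean V" by (unfold open_openin[symmetric]) (rule UV(2))
  moreover have "disjnt U V" unfolding disjnt_def by (rule UV(5))
  ultimately show "\<exists>U V. openin euclidean U \<and> openin euclidean V \<and> x \<in> U \<and> y \<in> V \<and> disjnt U V"
    using UV(3,4) by blast
qed

lemma hausdorff_cantor: "Hausdorff_space cantor_top"
proof -
  have "\<forall>i\<in>UNIV. Hausdorff_space ((\<lambda>_. euclidean :: enat topology) i)" using hausdorff_enat by simp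
  then show ?thesis unfolding cantor_top_def
    by (rule iffD2[OF Hausdorff_space_product_topology, OF disjI2])
qed

lemma open_eq_prefix: "open {z' :: nat \<Rightarrow> 'a::discrete_topology. \<forall>i<M. z' i = z i}"
proof -
  have "{z' :: nat \<Rightarrow> 'a. \<forall>i<M. z' i = z i} = {f. \<forall>i\<in>{..<M}. f (id i) \<in> (\<lambda>i. {z i}) i}" by auto
  also have "open \<dots>" by (rule product_topology_basis') (simp_all add: open_discrete)
  finally show ?thesis .
qed

theorem mainTheorem3:
  fixes D :: "(nat \<Rightarrow> enat) set"
  assumes "wide_set D"
  shows "\<exists>\<phi> \<psi>. embedding_map cantor_top (subtopology cantor_top D) \<phi> \<and>
                embedding_map baire_top (subtopology baire_top (P_map ` D)) \<psi> \<and>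
                (\<forall>x. \<psi> (P_map x) = P_map (\<phi> x))"
proof -
  obtain T where wt: "wide_tree T" and D: "D = lim_tree T"
    using assms by (auto simp: wide_set_def)
  interpret WT T by (rule WT.intro) (rule wt)
  define \<phi> where "\<phi> = PhiG \<infinity> []"
  have \<phi>D: "\<phi> w \<in> D" for w
    using Phi_in[OF gb_all root] D by (simp add: \<phi>_def)
  have cont: "continuous_on UNIV \<phi>"
  proof (rule continuous_on_coordinatewise_then_product)
    fix j
    show "continuous_on UNIV (\<lambda>w. \<phi> w j)"
      unfolding continuous_on_topological
    proof (intro ballI allI impI)
      fix w B assume B: "open B" "\<phi> w j \<in> B"
      obtain l0 where l0: "\<forall>e'. tr l0 e' = tr l0 (\<phi> w j) \<longrightarrow> e' \<in> B"
        using enat_open_nbhd[OF B] by blast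
      define l where "l = max l0 (Suc j)"
      have "\<exists>M. \<forall>w'. agree M M w w' \<longrightarrow> agree l l (\<phi> w) (\<phi> w')"
        using CONT[OF root, of w l] by (simp add: \<phi>_def)
      then obtain M where M: "\<forall>w'. agree M M w w' \<longrightarrow> agree l l (\<phi> w) (\<phi> w')"
        by (elim exE)
      show "\<exists>A. open A \<and> w \<in> A \<and> (\<forall>y\<in>UNIV. y \<in> A \<longrightarrow> \<phi> y j \<in> B)"
      proof (intro exI[of _ "{w'. agree M M w w'}"] conjI ballI impI)
        show "open {w'. agree M M w w'}" by (rule open_agree_nbhd)
        show "w \<in> {w'. agree M M w w'}" by simp
        fix y assume "y \<in> {w'. agree M M w w'}"
        then have ay: "agree M M w y" by simp
        have "agree l l (\<phi> w) (\<phi> y)" using M ay by blast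
        moreover have "j < l" by (simp add: l_def)
        ultimately have tl: "tr l (\<phi> w j) = tr l (\<phi> y j)" unfolding agree_def by blast
        have ll: "l0 \<le> l" by (simp add: l_def)
        have "tr l0 (\<phi> w j) = tr l0 (\<phi> y j)" using ll tl by (rule tr_coarsen)
        then have "tr l0 (\<phi> y j) = tr l0 (\<phi> w j)" by simp
        then show "\<phi> y j \<in> B" using l0 by blast
      qed
    qed
  qed
  have injphi: "inj \<phi>"
  proof (rule injI)
    fix x y assume xy: "\<phi> x = \<phi> y"
    show "x = y"
    proof
      fix i
      have "\<exists>M. \<forall>w'. (\<forall>i<M. PhiG \<infinity> [] w' i = PhiG \<infinity> [] y i) \<longrightarrow> (\<forall>k<Suc i. w' k = y k)"
        by (rule INV[OF root])
      then obtain M where M: "\<forall>w'. (\<forall>i<M. PhiG \<infinity> [] w' i = PhiG \<infinity> [] y i) \<longrightarrow> (\<forall>k<Suc i. w' k = y k)"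
        by (elim exE)
      have "\<forall>k<Suc i. x k = y k" using M[THEN spec, of x] xy by (simp add: \<phi>_def)
      then show "x i = y i" by simp
    qed
  qed
  have E1: "embedding_map cantor_top (subtopology cantor_top D) \<phi>"
  proof -
    have "continuous_map cantor_top cantor_top \<phi>" using cont by (simp add: cantor_top_eq)
    moreover have "inj_on \<phi> (topspace cantor_top)" using injphi by (simp add: cantor_top_eq)
    ultimately have "embedding_map cantor_top cantor_top \<phi>"
      using compact_cantor hausdorff_cantor by (simp add: continuous_imp_embedding_map)
    then show ?thesis using \<phi>D by (simp add: embedding_map_in_subtopology image_subset_iff)
  qed
  define \<psi> where "\<psi> = (\<lambda>z. P_map (\<phi> (Qmap z)))"
  define g where "g = (\<lambda>v. P_map (inv \<phi> (Qmap v)))"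
  have g\<psi>: "g (\<psi> z) = z" for z
    using injphi by (simp add: g_def \<psi>_def QP PQ)
  have cont\<psi>: "continuous_on UNIV \<psi>"
  proof (rule continuous_on_coordinatewise_then_product)
    fix j
    show "continuous_on UNIV (\<lambda>z. \<psi> z j)"
      unfolding continuous_on_topological
    proof (intro ballI allI impI)
      fix z B assume B: "open B" "\<psi> z j \<in> B"
      have "\<exists>M. \<forall>w'. (\<forall>i<M. w' i = Qmap z i) \<longrightarrow> (\<forall>i<Suc j. \<phi> w' i = \<phi> (Qmap z) i)"
        using EXACT[OF root, of "Qmap z" "Suc j"] by (simp add: \<phi>_def)
      then obtain M where M: "\<forall>w'. (\<forall>i<M. w' i = Qmap z i) \<longrightarrow> (\<forall>i<Suc j. \<phi> w' i = \<phi> (Qmap z) i)"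
        by (elim exE)
      show "\<exists>A. open A \<and> z \<in> A \<and> (\<forall>y\<in>UNIV. y \<in> A \<longrightarrow> \<psi> y j \<in> B)"
      proof (intro exI[of _ "{z'. \<forall>i<M. z' i = z i}"] conjI ballI impI)
        show "open {z'. \<forall>i<M. z' i = z i}" by (rule open_eq_prefix)
        show "z \<in> {z'. \<forall>i<M. z' i = z i}" by simp
        fix y assume "y \<in> {z'. \<forall>i<M. z' i = z i}"
        then have "\<forall>i<M. Qmap y i = Qmap z i" by (simp add: Qmap_def)
        then have "\<forall>i<Suc j. \<phi> (Qmap y) i = \<phi> (Qmap z) i" using M by blast
        then have "\<phi> (Qmap y) j = \<phi> (Qmap z) j" by simp
        then have "\<psi> y j = \<psi> z j" by (simp add: \<psi>_def P_nth)
        then show "\<psi> y j \<in> B" using B by simp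
      qed
    qed
  qed
  have contg: "continuous_on (range \<psi>) g"
  proof (rule continuous_on_coordinatewise_then_product)
    fix j
    show "continuous_on (range \<psi>) (\<lambda>v. g v j)"
      unfolding continuous_on_topological
    proof (intro ballI allI impI)
      fix v B assume v: "v \<in> range \<psi>" and B: "open B" "g v j \<in> B"
      obtain z where z: "v = \<psi> z" using v by blast
      have "\<exists>M. \<forall>w'. (\<forall>i<M. PhiG \<infinity> [] w' i = PhiG \<infinity> [] (Qmap z) i) \<longrightarrow> (\<forall>i<Suc j. w' i = Qmap z i)"
        by (rule INV[OF root])
      then obtain M where M: "\<forall>w'. (\<forall>i<M. PhiG \<infinity> [] w' i = PhiG \<infinity> [] (Qmap z) i) \<longrightarrow> (\<forall>i<Suc j. w' i = Qmap z i)"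
        by (elim exE)
      show "\<exists>A. open A \<and> v \<in> A \<and> (\<forall>y\<in>range \<psi>. y \<in> A \<longrightarrow> g y j \<in> B)"
      proof (intro exI[of _ "{v'. \<forall>i<M. v' i = v i}"] conjI ballI impI)
        show "open {v'. \<forall>i<M. v' i = v i}" by (rule open_eq_prefix)
        show "v \<in> {v'. \<forall>i<M. v' i = v i}" by simp
        fix y assume y: "y \<in> range \<psi>" "y \<in> {v'. \<forall>i<M. v' i = v i}"
        obtain z' where z': "y = \<psi> z'" using y(1) by blast
        have "\<forall>i<M. P_map (\<phi> (Qmap z')) i = P_map (\<phi> (Qmap z)) i"
          using y(2) z z' by (simp add: \<psi>_def)
        then have "\<forall>i<M. PhiG \<infinity> [] (Qmap z') i = PhiG \<infinity> [] (Qmap z) i"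
          by (simp add: P_nth \<phi>_def)
        then have "Qmap z' j = Qmap z j" using M by blast
        then have "P_map (Qmap z') j = P_map (Qmap z) j" by (simp add: P_nth)
        then have "z' j = z j" by (simp add: PQ)
        then have "g y j = g v j" using z z' g\<psi> by simp
        then show "g y j \<in> B" using B by simp
      qed
    qed
  qed
  have E2: "embedding_map baire_top (subtopology baire_top (P_map ` D)) \<psi>"
  proof -
    have hm: "homeomorphic_maps euclidean (top_of_set (range \<psi>)) \<psi> g"
      unfolding homeomorphic_maps_def
    proof (intro conjI)
      show "continuous_map euclidean (top_of_set (range \<psi>)) \<psi>"
        using cont\<psi> by (simp add: continuous_map_in_subtopology)
      show "continuous_map (top_of_set (range \<psi>)) euclidean g" using contg by simp
      show "\<forall>x\<in>topspace euclidean. g (\<psi> x) = x" using g\<psi> by simp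
      show "\<forall>y\<in>topspace (top_of_set (range \<psi>)). \<psi> (g y) = y" using g\<psi> by auto
    qed
    have "embedding_map euclidean euclidean \<psi>"
      unfolding embedding_map_def using hm by (auto simp: homeomorphic_map_maps)
    moreover have "\<psi> ` UNIV \<subseteq> P_map ` D" using \<phi>D by (auto simp: \<psi>_def)
    ultimately show ?thesis by (simp add: embedding_map_in_subtopology baire_eq)
  qed
  have comm: "\<forall>x. \<psi> (P_map x) = P_map (\<phi> x)" by (simp add: \<psi>_def QP)
  show ?thesis using E1 E2 comm by blast
qed

end
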